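(* Let $d\in\{1,2\}$ and let $Q,V:\mathbb{Z}^d\to\mathbb{R}$. Suppose $h_Q$ is bounded above, let $E_0=\sup\sigma(h_Q)$ be its ground-state energy, and suppose there is a bounded function $\psi:\mathbb{Z}^d\to(0,\infty)$ with $\sum_{|m-n|=1}\psi(m)+Q(n)\psi(n)=E_0\psi(n)$ for all $n\in\mathbb{Z}^d$. If both $h_{Q+V}\le E_0$ and $h_{Q-V}\le E_0$ (i.e. $\langle\phi|h_{Q\pm V}|\phi\rangle\le E_0\|\phi\|^2$ for all finitely supported $\phi$), then $V\equiv0$.
   Context: For $W:\mathbb{Z}^d\to\mathbb{R}$, $h_W$ denotes the discrete Schrödinger operator on $\ell^2(\mathbb{Z}^d)$, $[h_W\phi](n)=\sum_{m:\,|m-n|=1}\phi(m)+W(n)\phi(n)$ (sum over the $2d$ nearest neighbours), understood via its quadratic form on finitely supported sequences. In the discrete setting the ground-state energy is the supremum of the spectrum, and a ground state is a (pointwise) solution of $h_Q\psi=E_0\psi$ with $E_0$ the ground-state energy. *)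

theory Defs
  imports "HOL-Analysis.Analysis"
begin

text \<open>Lattice Z^d is modelled as int ^ 'd (d = CARD('d)).
  Nearest neighbours: l1-distance exactly 1.\<close>
definition nbr :: "int ^ 'd \<Rightarrow> int ^ 'd \<Rightarrow> bool" where
  "nbr m n \<longleftrightarrow> (\<Sum>i\<in>UNIV. \<bar>m $ i - n $ i\<bar>) = 1"

definition supp :: "(int ^ 'd \<Rightarrow> real) \<Rightarrow> (int ^ 'd) set" where
  "supp \<phi> = {n. \<phi> n \<noteq> 0}"

definition finsupp :: "(int ^ 'd \<Rightarrow> real) \<Rightarrow> bool" where
  "finsupp \<phi> \<longleftrightarrow> finite (supp \<phi>)"

definition hop :: "(int ^ 'd \<Rightarrow> real) \<Rightarrow> (int ^ 'd \<Rightarrow> real) \<Rightarrow> int ^ 'd \<Rightarrow> real" where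
  "hop W \<phi> n = (\<Sum>m\<in>{m. nbr m n}. \<phi> m) + W n * \<phi> n"

definition qform :: "(int ^ 'd \<Rightarrow> real) \<Rightarrow> (int ^ 'd \<Rightarrow> real) \<Rightarrow> real" where
  "qform W \<phi> = (\<Sum>n\<in>supp \<phi>. \<phi> n * hop W \<phi> n)"

definition sqnorm :: "(int ^ 'd \<Rightarrow> real) \<Rightarrow> real" where
  "sqnorm \<phi> = (\<Sum>n\<in>supp \<phi>. (\<phi> n)\<^sup>2)"

definition bounded_above_op :: "(int ^ 'd \<Rightarrow> real) \<Rightarrow> bool" where
  "bounded_above_op W \<longleftrightarrow> (\<exists>C. \<forall>\<phi>. finsupp \<phi> \<longrightarrow> qform W \<phi> \<le> C * sqnorm \<phi>)"

definition op_le :: "(int ^ 'd \<Rightarrow> real) \<Rightarrow> real \<Rightarrow> bool" where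
  "op_le W E \<longleftrightarrow> (\<forall>\<phi>. finsupp \<phi> \<longrightarrow> qform W \<phi> \<le> E * sqnorm \<phi>)"

text \<open>Ground-state energy sup sigma(h_W), via the variational (Rayleigh) characterisation
  on the form core of finitely supported sequences.\<close>
definition ground_energy :: "(int ^ 'd \<Rightarrow> real) \<Rightarrow> real" where
  "ground_energy W = (SUP \<phi>\<in>{\<phi>. finsupp \<phi> \<and> sqnorm \<phi> = 1}. qform W \<phi>)"

end

theory Submission
  imports Defs "HOL-Analysis.Harmonic_Numbers"
begin


definition l1 :: "int ^ 'd \<Rightarrow> int" where "l1 v = (\<Sum>i\<in>UNIV. \<bar>v $ i\<bar>)"
definition ev :: "'d \<Rightarrow> int \<Rightarrow> int ^ 'd" where "ev k s = (\<chi> j. if j = k then s else 0)"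
definition nb :: "int ^ 'd \<Rightarrow> (int ^ 'd) set" where "nb n = {m. nbr m n}"

lemma nbr_sym: "nbr m n = nbr n m"
  unfolding nbr_def by (simp add: abs_minus_commute)

lemma nbr_irrefl: "\<not> nbr n n"
  unfolding nbr_def by simp

lemma nbr_char:
  assumes "nbr m n" shows "\<exists>k s. s \<in> {-1,1} \<and> m = n + ev k s"
proof -
  have S: "(\<Sum>i\<in>UNIV. \<bar>m$i - n$i\<bar>) = 1" using assms by (simp add: nbr_def)
  have "\<exists>k. m$k \<noteq> n$k"
  proof (rule ccontr)
    assume "\<not> ?thesis"
    then have "(\<Sum>i\<in>UNIV. \<bar>m$i - n$i\<bar>) = 0" by simp
    with S show False by simp
  qed
  then obtain k where k: "m$k \<noteq> n$k" by blast
  have sp: "(\<Sum>i\<in>UNIV. \<bar>m$i - n$i\<bar>) = \<bar>m$k - n$k\<bar> + (\<Sum>i\<in>UNIV-{k}. \<bar>m$i - n$i\<bar>)"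
    by (simp add: sum.remove)
  have nn: "(\<Sum>i\<in>UNIV-{k}. \<bar>m$i - n$i\<bar>) \<ge> 0" by (simp add: sum_nonneg)
  have "\<bar>m$k - n$k\<bar> \<ge> 1" using k by linarith
  hence a: "\<bar>m$k - n$k\<bar> = 1" and b: "(\<Sum>i\<in>UNIV-{k}. \<bar>m$i - n$i\<bar>) = 0"
    using S sp nn by linarith+
  from b have "\<forall>i\<in>UNIV-{k}. \<bar>m$i - n$i\<bar> = 0"
    by (subst (asm) sum_nonneg_eq_0_iff) auto
  hence "m = n + ev k (m$k - n$k)" by (auto simp: vec_eq_iff ev_def)
  moreover have "m$k - n$k \<in> {-1,1}" using a by auto
  ultimately show ?thesis by blast
qed

lemma nb_sub: "nb n \<subseteq> (\<lambda>(k,s). n + ev k s) ` (UNIV \<times> {-1,1})"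
  using nbr_char unfolding nb_def by fastforce

lemma nb_finite: "finite (nb n)"
  by (rule finite_subset[OF nb_sub]) auto

lemma nb_card: "card (nb (n :: int ^ 'd)) \<le> 2 * CARD('d)"
proof -
  have "card (nb n) \<le> card ((\<lambda>(k,s). n + ev k s) ` (UNIV \<times> {-1,1::int}))"
    by (rule card_mono[OF _ nb_sub]) auto
  also have "\<dots> \<le> card (UNIV \<times> {-1,1::int} :: ('d \<times> int) set)" by (rule card_image_le) simp
  also have "\<dots> = 2 * CARD('d)" by (simp add: card_cartesian_product)
  finally show ?thesis .
qed

lemma nbr_l1:
  assumes "nbr m n" shows "\<bar>l1 (m - c) - l1 (n - c)\<bar> \<le> 1"
proof -
  have S: "(\<Sum>i\<in>UNIV. \<bar>m$i - n$i\<bar>) = 1" using assms by (simp add: nbr_def)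
  have 1: "l1 (m - c) \<le> l1 (n - c) + (\<Sum>i\<in>UNIV. \<bar>m$i - n$i\<bar>)"
    unfolding l1_def sum.distrib[symmetric] by (rule sum_mono) simp
  have 2: "l1 (n - c) \<le> l1 (m - c) + (\<Sum>i\<in>UNIV. \<bar>m$i - n$i\<bar>)"
    unfolding l1_def sum.distrib[symmetric] by (rule sum_mono) simp
  show ?thesis using 1 2 S by linarith
qed


lemma hop_nb: "hop W \<phi> n = (\<Sum>m\<in>nb n. \<phi> m) + W n * \<phi> n"
  by (simp add: hop_def nb_def)

lemma sum_supp_ext:
  assumes "finite S" "supp \<phi> \<subseteq> S"
  shows "(\<Sum>n\<in>supp \<phi>. \<phi> n * g n) = (\<Sum>n\<in>S. \<phi> n * g n)"
  by (rule sum.mono_neutral_left) (use assms in \<open>auto simp: supp_def\<close>)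

lemma sum_supp_ext2:
  assumes "finite S" "supp \<phi> \<subseteq> S"
  shows "(\<Sum>n\<in>supp \<phi>. g n * (\<phi> n)\<^sup>2) = (\<Sum>n\<in>S. g n * (\<phi> n)\<^sup>2)"
  by (rule sum.mono_neutral_left) (use assms in \<open>auto simp: supp_def\<close>)

lemma qform_S: "finite S \<Longrightarrow> supp \<phi> \<subseteq> S \<Longrightarrow> qform W \<phi> = (\<Sum>n\<in>S. \<phi> n * hop W \<phi> n)"
  unfolding qform_def by (rule sum_supp_ext)

lemma sqnorm_S: "finite S \<Longrightarrow> supp \<phi> \<subseteq> S \<Longrightarrow> sqnorm \<phi> = (\<Sum>n\<in>S. (\<phi> n)\<^sup>2)"
  unfolding sqnorm_def using sum_supp_ext2[of S \<phi> "\<lambda>_. 1"] by simp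

lemma qform_plus: "qform (\<lambda>n. Q n + V n) \<phi> = qform Q \<phi> + (\<Sum>n\<in>supp \<phi>. V n * (\<phi> n)\<^sup>2)"
  unfolding qform_def hop_def
  by (subst sum.distrib[symmetric]) (rule sum.cong, auto simp: algebra_simps power2_eq_square)

lemma qform_minus: "qform (\<lambda>n. Q n - V n) \<phi> = qform Q \<phi> - (\<Sum>n\<in>supp \<phi>. V n * (\<phi> n)\<^sup>2)"
  unfolding qform_def hop_def
  by (subst sum_subtractf[symmetric]) (rule sum.cong, auto simp: algebra_simps power2_eq_square)

lemma pm_bound:
  assumes "op_le (\<lambda>n. Q n + V n) E" "op_le (\<lambda>n. Q n - V n) E" "finsupp \<phi>"
  shows "\<bar>\<Sum>n\<in>supp \<phi>. V n * (\<phi> n)\<^sup>2\<bar> \<le> E * sqnorm \<phi> - qform Q \<phi>"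
proof -
  have "qform (\<lambda>n. Q n + V n) \<phi> \<le> E * sqnorm \<phi>" "qform (\<lambda>n. Q n - V n) \<phi> \<le> E * sqnorm \<phi>"
    using assms unfolding op_le_def by blast+
  then show ?thesis unfolding qform_plus qform_minus by linarith
qed

lemma sum_upd:
  fixes f :: "'a \<Rightarrow> real"
  assumes "finite A"
  shows "(\<Sum>m\<in>A. (f(a:=x)) m) = (\<Sum>m\<in>A. f m) + (if a \<in> A then x - f a else 0)"
proof (cases "a \<in> A")
  case True
  then show ?thesis using assms by (simp add: sum.remove algebra_simps)
next
  case False
  then have "(\<Sum>m\<in>A. (f(a:=x)) m) = (\<Sum>m\<in>A. f m)" by (intro sum.cong) auto
  then show ?thesis using False by simp
qed


lemma perturb:
  fixes \<phi> \<psi> Q V :: "int ^ 'd \<Rightarrow> real" and t E :: real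
  assumes gr: "(\<Sum>m\<in>nb n0. \<psi> m) + Q n0 * \<psi> n0 = E * \<psi> n0"
    and fs: "finsupp \<phi>" and e0: "\<phi> n0 = \<psi> n0" and en: "\<forall>m\<in>nb n0. \<phi> m = \<psi> m"
  defines "\<phi>' \<equiv> \<phi>(n0 := (1+t) * \<psi> n0)"
  shows "finsupp \<phi>'"
    and "E * sqnorm \<phi>' - qform Q \<phi>' = E * sqnorm \<phi> - qform Q \<phi> + t\<^sup>2 * \<psi> n0 * (\<Sum>m\<in>nb n0. \<psi> m)"
    and "(\<Sum>n\<in>supp \<phi>'. V n * (\<phi>' n)\<^sup>2) = (\<Sum>n\<in>supp \<phi>. V n * (\<phi> n)\<^sup>2) + (2*t + t\<^sup>2) * V n0 * (\<psi> n0)\<^sup>2"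
proof -
  define S where "S = insert n0 (supp \<phi> \<union> nb n0)"
  define R where "R = S - {n0}"
  define P where "P = (\<Sum>m\<in>nb n0. \<psi> m)"
  define p0 where "p0 = \<psi> n0"
  define q0 where "q0 = Q n0"
  have fS: "finite S" using fs nb_finite unfolding S_def finsupp_def by auto
  have fR: "finite R" using fS unfolding R_def by auto
  have n0S: "n0 \<in> S" unfolding S_def by auto
  have n0nb: "n0 \<notin> nb n0" by (simp add: nb_def nbr_irrefl)
  have sS: "supp \<phi> \<subseteq> S" unfolding S_def by auto
  have sS': "supp \<phi>' \<subseteq> S" unfolding S_def supp_def \<phi>'_def by auto
  show "finsupp \<phi>'" using finite_subset[OF sS' fS] by (simp add: finsupp_def)
  have Sdec: "\<And>g. (\<Sum>n\<in>S. g n) = g n0 + (\<Sum>n\<in>R. (g n :: real))"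
    unfolding R_def using fS n0S by (simp add: sum.remove)
  have nbP: "(\<Sum>m\<in>nb n0. \<phi> m) = P" unfolding P_def using en by simp
  have nbP': "(\<Sum>m\<in>nb n0. \<phi>' m) = P" unfolding nbP[symmetric]
    by (rule sum.cong) (use n0nb in \<open>auto simp: \<phi>'_def\<close>)
  have phR: "\<And>n. n \<in> R \<Longrightarrow> \<phi>' n = \<phi> n" unfolding R_def \<phi>'_def by auto
  have hopR: "\<And>n. n \<in> R \<Longrightarrow> hop Q \<phi>' n = hop Q \<phi> n + (if n0 \<in> nb n then t * p0 else 0)"
  proof -
    fix n assume nR: "n \<in> R"
    have a: "(\<Sum>m\<in>nb n. \<phi>' m) = (\<Sum>m\<in>nb n. \<phi> m) + (if n0\<in>nb n then (1+t)*\<psi> n0 - \<phi> n0 else 0)"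
      unfolding \<phi>'_def by (rule sum_upd[OF nb_finite])
    show "hop Q \<phi>' n = hop Q \<phi> n + (if n0 \<in> nb n then t * p0 else 0)"
      unfolding hop_nb a using phR[OF nR] e0 by (simp add: p0_def algebra_simps)
  qed
  have filt: "{n \<in> R. n0 \<in> nb n} = nb n0"
    unfolding R_def S_def nb_def using nbr_sym nbr_irrefl by auto
  have crossR: "(\<Sum>n\<in>R. \<phi> n * (if n0 \<in> nb n then t * p0 else 0)) = t * p0 * P"
  proof -
    have "(\<Sum>n\<in>R. \<phi> n * (if n0 \<in> nb n then t * p0 else 0)) = t * p0 * (\<Sum>n\<in>R. if n0 \<in> nb n then \<phi> n else 0)"
      by (simp add: sum_distrib_left if_distrib algebra_simps cong: if_cong)
    also have "(\<Sum>n\<in>R. if n0 \<in> nb n then \<phi> n else 0) = (\<Sum>n\<in>nb n0. \<phi> n)"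
      by (simp add: sum.inter_filter[OF fR, symmetric] filt)
    finally show ?thesis using nbP by simp
  qed
  have h1: "qform Q \<phi> = p0 * (P + q0 * p0) + (\<Sum>n\<in>R. \<phi> n * hop Q \<phi> n)"
    using qform_S[OF fS sS] Sdec e0 nbP by (simp add: hop_nb p0_def q0_def)
  have h2: "qform Q \<phi>' = (1+t) * p0 * (P + q0 * ((1+t) * p0)) + (\<Sum>n\<in>R. \<phi> n * hop Q \<phi> n) + t * p0 * P"
  proof -
    have "qform Q \<phi>' = \<phi>' n0 * hop Q \<phi>' n0 + (\<Sum>n\<in>R. \<phi>' n * hop Q \<phi>' n)"
      using qform_S[OF fS sS'] Sdec by simp
    also have "(\<Sum>n\<in>R. \<phi>' n * hop Q \<phi>' n) = (\<Sum>n\<in>R. \<phi> n * hop Q \<phi> n + \<phi> n * (if n0 \<in> nb n then t * p0 else 0))"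
      by (rule sum.cong) (auto simp: phR hopR algebra_simps)
    also have "\<dots> = (\<Sum>n\<in>R. \<phi> n * hop Q \<phi> n) + t * p0 * P"
      by (simp add: sum.distrib crossR)
    also have "\<phi>' n0 * hop Q \<phi>' n0 = (1+t) * p0 * (P + q0 * ((1+t) * p0))"
      unfolding hop_nb nbP' by (simp add: \<phi>'_def p0_def q0_def)
    finally show ?thesis by simp
  qed
  have h3: "sqnorm \<phi> = p0\<^sup>2 + (\<Sum>n\<in>R. (\<phi> n)\<^sup>2)"
    using sqnorm_S[OF fS sS] Sdec e0 by (simp add: p0_def)
  have h4: "sqnorm \<phi>' = ((1+t)*p0)\<^sup>2 + (\<Sum>n\<in>R. (\<phi> n)\<^sup>2)"
    using sqnorm_S[OF fS sS'] Sdec phR by (simp add: p0_def \<phi>'_def)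
  have PE: "P = E * p0 - q0 * p0" using gr unfolding P_def p0_def q0_def by simp
  show "E * sqnorm \<phi>' - qform Q \<phi>' = E * sqnorm \<phi> - qform Q \<phi> + t\<^sup>2 * \<psi> n0 * (\<Sum>m\<in>nb n0. \<psi> m)"
    unfolding h1 h2 h3 h4 P_def[symmetric] p0_def[symmetric] unfolding PE
    by (simp add: algebra_simps power2_eq_square)
  have v1: "(\<Sum>n\<in>supp \<phi>. V n * (\<phi> n)\<^sup>2) = V n0 * p0\<^sup>2 + (\<Sum>n\<in>R. V n * (\<phi> n)\<^sup>2)"
    using sum_supp_ext2[OF fS sS] Sdec e0 by (simp add: p0_def)
  have v2: "(\<Sum>n\<in>supp \<phi>'. V n * (\<phi>' n)\<^sup>2) = V n0 * ((1+t)*p0)\<^sup>2 + (\<Sum>n\<in>R. V n * (\<phi> n)\<^sup>2)"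
    using sum_supp_ext2[OF fS sS'] Sdec phR by (simp add: p0_def \<phi>'_def)
  show "(\<Sum>n\<in>supp \<phi>'. V n * (\<phi>' n)\<^sup>2) = (\<Sum>n\<in>supp \<phi>. V n * (\<phi> n)\<^sup>2) + (2*t + t\<^sup>2) * V n0 * (\<psi> n0)\<^sup>2"
    unfolding v1 v2 p0_def[symmetric] by (simp add: algebra_simps power2_eq_square)
qed



lemma gsr_bound:
  fixes \<psi> f Q :: "int ^ 'd \<Rightarrow> real" and E B :: real
  assumes gr: "\<forall>n. (\<Sum>m\<in>nb n. \<psi> m) + Q n * \<psi> n = E * \<psi> n"
    and psi: "\<forall>n. 0 < \<psi> n \<and> \<psi> n \<le> B"
    and fT: "finite T" and sT: "supp f \<subseteq> T" and nT: "\<forall>n\<in>supp f. nb n \<subseteq> T"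
  shows "E * sqnorm (\<lambda>n. \<psi> n * f n) - qform Q (\<lambda>n. \<psi> n * f n)
         \<le> B\<^sup>2 / 2 * (\<Sum>n\<in>T. \<Sum>m\<in>nb n. (f n - f m)\<^sup>2)"
proof -
  define \<phi> where "\<phi> = (\<lambda>n. \<psi> n * f n)"
  define G where "G = (\<lambda>n m. if nbr m n then \<psi> n * \<psi> m * (f n * (f n - f m)) else 0)"
  have spp: "supp \<phi> = supp f" using psi unfolding supp_def \<phi>_def by (metis less_irrefl mult_eq_0_iff)
  have sT': "supp \<phi> \<subseteq> T" using sT spp by simp
  have F: "E * sqnorm \<phi> - qform Q \<phi> = (\<Sum>n\<in>T. E * (\<phi> n)\<^sup>2 - \<phi> n * hop Q \<phi> n)"
    unfolding sqnorm_S[OF fT sT'] qform_S[OF fT sT'] by (simp add: sum_distrib_left sum_subtractf)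
  have trm: "E * (\<phi> n)\<^sup>2 - \<phi> n * hop Q \<phi> n = (\<Sum>m\<in>T. G n m)" if nT0: "n \<in> T" for n
  proof (cases "f n = 0")
    case True
    then have "(\<Sum>m\<in>T. G n m) = 0" unfolding G_def by (intro sum.neutral) simp
    then show ?thesis using True by (simp add: \<phi>_def)
  next
    case False
    then have nbT: "nb n \<subseteq> T" using nT by (auto simp: supp_def)
    have filt: "{m \<in> T. nbr m n} = nb n" using nbT by (auto simp: nb_def)
    have "(\<Sum>m\<in>T. G n m) = (\<Sum>m\<in>nb n. \<psi> n * \<psi> m * (f n * (f n - f m)))"
      unfolding G_def by (simp add: sum.inter_filter[OF fT, symmetric] filt)
    also have "\<dots> = \<psi> n * f n * f n * (\<Sum>m\<in>nb n. \<psi> m) - \<psi> n * f n * (\<Sum>m\<in>nb n. \<phi> m)"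
      by (simp add: sum_distrib_left sum_subtractf[symmetric] algebra_simps \<phi>_def)
    also have "(\<Sum>m\<in>nb n. \<psi> m) = E * \<psi> n - Q n * \<psi> n" using gr by (simp add: algebra_simps)
    finally show ?thesis unfolding hop_nb by (simp add: \<phi>_def algebra_simps power2_eq_square)
  qed
  have F2: "E * sqnorm \<phi> - qform Q \<phi> = (\<Sum>n\<in>T. \<Sum>m\<in>T. G n m)"
    unfolding F by (rule sum.cong) (auto simp: trm)
  have sw: "(\<Sum>n\<in>T. \<Sum>m\<in>T. G n m) = (\<Sum>n\<in>T. \<Sum>m\<in>T. G m n)"
    by (rule sum.swap)
  have GG: "G n m + G m n = (if nbr m n then \<psi> n * \<psi> m * (f n - f m)\<^sup>2 else 0)" for n m
  proof (cases "nbr m n")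
    case True
    then have "nbr n m" using nbr_sym by blast
    then show ?thesis using True unfolding G_def by (simp add: algebra_simps power2_eq_square)
  next
    case False
    then have "\<not> nbr n m" using nbr_sym by blast
    then show ?thesis using False unfolding G_def by simp
  qed
  have Bsq: "\<psi> n * \<psi> m \<le> B\<^sup>2" for n m
  proof -
    have "\<psi> n * \<psi> m \<le> B * B" using psi by (intro mult_mono) (auto intro: less_imp_le)
    then show ?thesis by (simp add: power2_eq_square)
  qed
  have inner: "(\<Sum>m\<in>T. G n m + G m n) \<le> B\<^sup>2 * (\<Sum>m\<in>nb n. (f n - f m)\<^sup>2)" for n
  proof -
    have "(\<Sum>m\<in>T. G n m + G m n) \<le> (\<Sum>m\<in>T. if nbr m n then B\<^sup>2 * (f n - f m)\<^sup>2 else 0)"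
      unfolding GG by (rule sum_mono) (auto intro: mult_right_mono Bsq)
    also have "\<dots> = (\<Sum>m\<in>{m\<in>T. nbr m n}. B\<^sup>2 * (f n - f m)\<^sup>2)"
      by (simp add: sum.inter_filter[OF fT])
    also have "\<dots> \<le> (\<Sum>m\<in>nb n. B\<^sup>2 * (f n - f m)\<^sup>2)"
      by (rule sum_mono2[OF nb_finite]) (auto simp: nb_def)
    finally show ?thesis by (simp add: sum_distrib_left)
  qed
  have "2 * (E * sqnorm \<phi> - qform Q \<phi>) = (\<Sum>n\<in>T. \<Sum>m\<in>T. G n m + G m n)"
    using F2 sw by (simp add: sum.distrib)
  also have "\<dots> \<le> (\<Sum>n\<in>T. B\<^sup>2 * (\<Sum>m\<in>nb n. (f n - f m)\<^sup>2))"
    by (rule sum_mono) (rule inner)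
  finally show ?thesis unfolding \<phi>_def by (simp add: sum_distrib_left[symmetric])
qed



definition LL :: "nat \<Rightarrow> real" where "LL M = harm M - 1"
definition hh :: "nat \<Rightarrow> nat \<Rightarrow> real" where
  "hh M k = max 0 (min 1 ((harm M - harm k) / LL M))"
definition tt :: "nat \<Rightarrow> nat \<Rightarrow> real" where
  "tt M k = (if k \<le> M then 1 / (real (max k 1) * LL M) else 0)"

lemma harm_2: "harm 2 = (3/2 :: real)"
  by (simp add: harm_def numeral_2_eq_2)

lemma LL_pos: "M \<ge> 2 \<Longrightarrow> LL M > 0"
  using harm_mono[of 2 M, where 'a=real] harm_2 unfolding LL_def by linarith

lemma clamp_lip: "\<bar>max 0 (min 1 x) - max 0 (min 1 y)\<bar> \<le> \<bar>x - y :: real\<bar>"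
  by (auto simp: max_def min_def abs_if)

lemma hh_one: "M \<ge> 2 \<Longrightarrow> k \<le> 1 \<Longrightarrow> hh M k = 1"
proof -
  assume M: "M \<ge> 2" and k: "k \<le> 1"
  have "harm k \<le> (1::real)" using k by (cases k) (auto simp: harm_def)
  then have "(harm M - harm k) / LL M \<ge> 1" using LL_pos[OF M] by (simp add: LL_def field_simps)
  then show ?thesis unfolding hh_def by simp
qed

lemma hh_zero: "M \<le> k \<Longrightarrow> M \<ge> 2 \<Longrightarrow> hh M k = 0"
proof -
  assume k: "M \<le> k" and M: "M \<ge> 2"
  have "harm M \<le> (harm k :: real)" using harm_mono[OF k] .
  then have "(harm M - harm k) / LL M \<le> 0" using LL_pos[OF M] by (simp add: divide_nonpos_pos)
  then show ?thesis unfolding hh_def by simp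
qed

lemma hh_step: assumes M: "M \<ge> 2"
  shows "\<bar>hh M a - hh M (Suc a)\<bar> \<le> (if a < M then 1 / (real (Suc a) * LL M) else 0)"
proof (cases "a < M")
  case True
  have "\<bar>hh M a - hh M (Suc a)\<bar> \<le> \<bar>(harm M - harm a) / LL M - (harm M - harm (Suc a)) / LL M\<bar>"
    unfolding hh_def by (rule clamp_lip)
  also have "(harm M - harm a) / LL M - (harm M - harm (Suc a)) / LL M = (harm (Suc a) - harm a) / LL M"
    by (simp add: diff_divide_distrib)
  also have "\<dots> = 1 / (real (Suc a) * LL M)"
    by (simp add: harm_Suc divide_inverse)
  also have "\<bar>1 / (real (Suc a) * LL M)\<bar> = 1 / (real (Suc a) * LL M)"
    using LL_pos[OF M] by simp
  finally show ?thesis using True by simp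
next
  case False
  then show ?thesis using hh_zero[OF _ M, of a] hh_zero[OF _ M, of "Suc a"] by simp
qed

lemma tt_nonneg: "M \<ge> 2 \<Longrightarrow> tt M k \<ge> 0"
  using LL_pos[of M] unfolding tt_def by auto

lemma hh_edge:
  assumes M: "M \<ge> 2" and d: "\<bar>int a - int b\<bar> \<le> 1"
  shows "(hh M a - hh M b)\<^sup>2 \<le> (tt M a)\<^sup>2"
proof -
  have L: "LL M > 0" using LL_pos[OF M] .
  have "\<bar>hh M a - hh M b\<bar> \<le> tt M a"
  proof -
    have "b = a \<or> b = Suc a \<or> (a \<ge> 1 \<and> b = a - 1)" using d by arith
    then consider "b = a" | "b = Suc a" | c where "a = Suc c" "b = c"
      by (metis Suc_diff_1 less_eq_Suc_le One_nat_def)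
    then show ?thesis
    proof cases
      case 1 then show ?thesis using tt_nonneg[OF M] by simp
    next
      case 2
      have "\<bar>hh M a - hh M b\<bar> \<le> (if a < M then 1 / (real (Suc a) * LL M) else 0)"
        using hh_step[OF M, of a] 2 by simp
      also have "\<dots> \<le> tt M a" unfolding tt_def using L
        by (auto simp: frac_le divide_simps max_def)
      finally show ?thesis .
    next
      case 3
      have "\<bar>hh M a - hh M b\<bar> = \<bar>hh M c - hh M (Suc c)\<bar>" using 3 by (simp add: abs_minus_commute)
      also have "\<dots> \<le> (if c < M then 1 / (real (Suc c) * LL M) else 0)" by (rule hh_step[OF M])
      also have "\<dots> \<le> tt M a" unfolding tt_def using L 3 by auto
      finally show ?thesis .
    qed
  qed
  then show ?thesis using tt_nonneg[OF M, of a] by (metis abs_ge_zero power2_abs power_mono)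
qed

lemma tt_sum:
  assumes M: "M \<ge> 2"
  shows "(\<Sum>k\<in>{..Suc M}. (4 * real k + 2) * (tt M k)\<^sup>2) \<le> 6 * (1 + harm M) / (LL M)\<^sup>2"
proof -
  have L: "LL M > 0" using LL_pos[OF M] .
  define w where "w k = (if k = 0 then 1 else 0) + (if 1 \<le> k \<and> k \<le> M then 1 / real k else 0)" for k
  have tb: "(4 * real k + 2) * (tt M k)\<^sup>2 \<le> 6 / (LL M)\<^sup>2 * w k" for k
  proof (cases "k = 0")
    case True then show ?thesis using L M by (simp add: tt_def w_def power2_eq_square field_simps)
  next
    case False
    show ?thesis
    proof (cases "k \<le> M")
      case True
      have kp: "real k \<ge> 1" using False by simp
      have mk: "max k 1 = k" using False by simp
      have "tt M k = 1 / (real k * LL M)" using True unfolding tt_def mk by simp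
      then have "(4 * real k + 2) * (tt M k)\<^sup>2 = (4 * real k + 2) / (real k * real k * (LL M)\<^sup>2)"
        by (simp add: power2_eq_square)
      also have "\<dots> \<le> 6 * real k / (real k * real k * (LL M)\<^sup>2)"
        using L kp by (intro divide_right_mono) auto
      also have "\<dots> = 6 / (LL M)\<^sup>2 * w k" using False True kp by (simp add: w_def field_simps)
      finally show ?thesis .
    next
      case False2: False
      then show ?thesis using False by (simp add: tt_def w_def)
    qed
  qed
  have "(\<Sum>k\<in>{..Suc M}. (4 * real k + 2) * (tt M k)\<^sup>2) \<le> (\<Sum>k\<in>{..Suc M}. 6 / (LL M)\<^sup>2 * w k)"
    by (rule sum_mono) (rule tb)
  also have "(\<Sum>k\<in>{..Suc M}. w k) = 1 + harm M"
  proof -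
    have a: "(\<Sum>k\<in>{..Suc M}. (if k = 0 then 1 else 0 :: real)) = 1" by simp
    have b: "(\<Sum>k\<in>{..Suc M}. (if 1 \<le> k \<and> k \<le> M then 1 / real k else 0)) = (\<Sum>k\<in>{1..M}. 1 / real k)"
    proof -
      have e: "{k \<in> {..Suc M}. 1 \<le> k \<and> k \<le> M} = {1..M}" by auto
      have "(\<Sum>k\<in>{..Suc M}. (if 1 \<le> k \<and> k \<le> M then 1 / real k else 0)) = (\<Sum>k\<in>{k \<in> {..Suc M}. 1 \<le> k \<and> k \<le> M}. 1 / real k)"
        by (rule sum.inter_filter[symmetric]) simp
      then show ?thesis unfolding e .
    qed
    show ?thesis unfolding w_def sum.distrib a b by (simp add: harm_def divide_inverse)
  qed
  then have "(\<Sum>k\<in>{..Suc M}. 6 / (LL M)\<^sup>2 * w k) = 6 * (1 + harm M) / (LL M)\<^sup>2"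
    by (simp only: sum_distrib_left[symmetric]) simp
  finally show ?thesis .
qed



lemma l1_nonneg: "l1 v \<ge> 0"
  unfolding l1_def by (simp add: sum_nonneg)

lemma shell:
  fixes n0 :: "int ^ 'd"
  assumes dim: "CARD('d) = 1 \<or> CARD('d) = 2"
  shows "finite {n. l1 (n - n0) = int k} \<and> card {n. l1 (n - n0) = int k} \<le> 4 * k + 2"
  using dim
proof
  assume "CARD('d) = 1"
  then have "card (UNIV :: 'd set) = Suc 0" by simp
  then have "\<exists>i::'d. UNIV = {i}" by (simp only: card_1_singleton_iff)
  then obtain i :: 'd where U: "UNIV = {i}" by blast
  have l1i: "l1 v = \<bar>v $ i\<bar>" for v :: "int ^ 'd" unfolding l1_def U by simp
  have sub: "{n. l1 (n - n0) = int k} \<subseteq> (\<lambda>a. n0 + (\<chi> l. a)) ` {- int k, int k}"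
  proof
    fix n assume "n \<in> {n. l1 (n - n0) = int k}"
    then have a: "\<bar>(n - n0) $ i\<bar> = int k" by (simp add: l1i)
    have "n = n0 + (\<chi> l. (n - n0) $ i)"
    proof -
      have "n $ l = (n0 + (\<chi> l. (n - n0) $ i)) $ l" for l
      proof -
        have "l \<in> {i}" unfolding U[symmetric] by simp
        then show ?thesis by simp
      qed
      then show ?thesis unfolding vec_eq_iff by blast
    qed
    moreover have "(n - n0) $ i \<in> {- int k, int k}" using a by auto
    ultimately show "n \<in> (\<lambda>a. n0 + (\<chi> l. a)) ` {- int k, int k}" by blast
  qed
  have "card {n. l1 (n - n0) = int k} \<le> card ((\<lambda>a. n0 + (\<chi> l. a)) ` {- int k, int k} :: (int^'d) set)"
    by (rule card_mono[OF _ sub]) simp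
  also have "\<dots> \<le> card {- int k, int k}" by (rule card_image_le) simp
  also have "\<dots> \<le> 2" by (simp add: card_insert_if)
  finally show ?thesis using finite_subset[OF sub] by simp
next
  assume "CARD('d) = 2"
  then have "\<exists>i j::'d. UNIV = {i, j} \<and> i \<noteq> j" by (simp only: card_2_iff)
  then obtain i j :: 'd where U: "UNIV = {i, j}" and ij: "i \<noteq> j" by blast
  have l1i: "l1 v = \<bar>v $ i\<bar> + \<bar>v $ j\<bar>" for v :: "int ^ 'd" unfolding l1_def U using ij by simp
  define g :: "int \<times> int \<Rightarrow> int ^ 'd" where
    "g = (\<lambda>(a, s). n0 + (\<chi> l. if l = i then a else s * (int k - \<bar>a\<bar>)))"
  have sub: "{n. l1 (n - n0) = int k} \<subseteq> g ` ({- int k .. int k} \<times> {-1, 1})"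
  proof
    fix n assume "n \<in> {n. l1 (n - n0) = int k}"
    then have a: "\<bar>(n - n0) $ i\<bar> + \<bar>(n - n0) $ j\<bar> = int k" by (simp add: l1i)
    define s where "s = (if (n - n0) $ j \<ge> 0 then 1 else - 1 :: int)"
    have "n = g ((n - n0) $ i, s)"
    proof -
      have "n $ l = (g ((n - n0) $ i, s)) $ l" for l
      proof -
        have "l = i \<or> l = j" using U by auto
        then show ?thesis
        proof
          assume "l = i" then show ?thesis by (simp add: g_def)
        next
          assume lj: "l = j"
          have "s * (int k - \<bar>(n - n0) $ i\<bar>) = (n - n0) $ j" using a unfolding s_def by auto
          then show ?thesis using lj ij by (simp add: g_def)
        qed
      qed
      then show ?thesis unfolding vec_eq_iff by blast
    qed
    moreover have "((n - n0) $ i, s) \<in> {- int k .. int k} \<times> {-1, 1}" using a unfolding s_def by auto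
    ultimately show "n \<in> g ` ({- int k .. int k} \<times> {-1, 1})" by blast
  qed
  have "card {n. l1 (n - n0) = int k} \<le> card (g ` ({- int k .. int k} \<times> {-1, 1}))"
    by (rule card_mono[OF _ sub]) simp
  also have "\<dots> \<le> card ({- int k .. int k} \<times> {-1, 1::int})" by (rule card_image_le) simp
  also have "\<dots> = 4 * k + 2" by (simp add: card_cartesian_product)
  finally show ?thesis using finite_subset[OF sub] by simp
qed


lemma num_bound:
  fixes H \<epsilon> :: real
  assumes e: "\<epsilon> > 0" and H3: "H \<ge> 3" and He: "H \<ge> 72 / \<epsilon>"
  shows "4 * (6 * (1 + H) / (H - 1)\<^sup>2) \<le> \<epsilon>"
proof -
  have eH: "\<epsilon> * H \<ge> 72" using He e by (simp add: field_simps)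
  have sq: "(H - 1)\<^sup>2 \<ge> 4 * H\<^sup>2 / 9"
  proof -
    have "(2 * H / 3)\<^sup>2 \<le> (H - 1)\<^sup>2" using H3 by (intro power_mono) auto
    then show ?thesis by (simp add: power2_eq_square field_simps)
  qed
  have "\<epsilon> * (H - 1)\<^sup>2 \<ge> \<epsilon> * (4 * H\<^sup>2 / 9)" using sq e by (intro mult_left_mono) auto
  moreover have "\<epsilon> * (4 * H\<^sup>2 / 9) = 4 * H / 9 * (\<epsilon> * H)" by (simp add: power2_eq_square field_simps)
  moreover have "4 * H / 9 * (\<epsilon> * H) \<ge> 4 * H / 9 * 72" using eH H3 by (intro mult_left_mono) auto
  ultimately have "\<epsilon> * (H - 1)\<^sup>2 \<ge> 32 * H" by linarith
  moreover have "24 * (1 + H) \<le> 32 * H" using H3 by (simp add: algebra_simps)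
  ultimately have "24 * (1 + H) \<le> \<epsilon> * (H - 1)\<^sup>2" by (rule_tac order_trans) auto
  moreover have "(H - 1)\<^sup>2 > 0" using H3 by simp
  ultimately show ?thesis by (simp add: field_simps)
qed

lemma cutoff:
  fixes n0 :: "int ^ 'd"
  assumes dim: "CARD('d) = 1 \<or> CARD('d) = 2" and e: "\<epsilon> > 0"
  shows "\<exists>f T. finite T \<and> supp f \<subseteq> T \<and> (\<forall>n\<in>supp f. nb n \<subseteq> T) \<and>
     (\<forall>n. l1 (n - n0) \<le> 1 \<longrightarrow> f n = 1) \<and> (\<Sum>n\<in>T. \<Sum>m\<in>nb n. (f n - f m)\<^sup>2) \<le> \<epsilon>"
proof -
  have "\<forall>\<^sub>F n in sequentially. max 3 (72 / \<epsilon>) \<le> (harm n :: real)"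
    using harm_at_top unfolding filterlim_at_top by blast
  then obtain N where N: "\<And>n. n \<ge> N \<Longrightarrow> max 3 (72 / \<epsilon>) \<le> (harm n :: real)"
    unfolding eventually_sequentially by blast
  define M where "M = max N 2"
  have M2: "M \<ge> 2" unfolding M_def by simp
  have HM: "max 3 (72 / \<epsilon>) \<le> (harm M :: real)" using N unfolding M_def by simp
  have L: "LL M > 0" using LL_pos[OF M2] .
  define r where "r n = nat (l1 (n - n0))" for n
  define f where "f n = hh M (r n)" for n
  define T where "T = {n. r n \<le> Suc M}"
  have shell_eq: "{n \<in> T. r n = k} = {n. l1 (n - n0) = int k}" if "k \<le> Suc M" for k
    using that l1_nonneg unfolding T_def r_def by auto
  have TU: "T = (\<Union>k\<in>{..Suc M}. {n. l1 (n - n0) = int k})"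
  proof (intro set_eqI iffI)
    fix x assume "x \<in> T"
    then have "nat (l1 (x - n0)) \<in> {..Suc M}" "l1 (x - n0) = int (nat (l1 (x - n0)))"
      unfolding T_def r_def using l1_nonneg[of "x - n0"] by auto
    then show "x \<in> (\<Union>k\<in>{..Suc M}. {n. l1 (n - n0) = int k})" by blast
  next
    fix x assume "x \<in> (\<Union>k\<in>{..Suc M}. {n. l1 (n - n0) = int k})"
    then show "x \<in> T" unfolding T_def r_def by auto
  qed
  have fT: "finite T" unfolding TU using shell[OF dim] by blast
  have rnb: "\<bar>int (r m) - int (r n)\<bar> \<le> 1" if "m \<in> nb n" for m n
    using nbr_l1[of m n n0] that l1_nonneg[of "m - n0"] l1_nonneg[of "n - n0"]
    unfolding r_def nb_def by simp
  have sT: "supp f \<subseteq> T"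
  proof
    fix n assume "n \<in> supp f"
    then have "hh M (r n) \<noteq> 0" unfolding supp_def f_def by simp
    then have "r n < M" using hh_zero[OF _ M2] by (meson not_le)
    then show "n \<in> T" unfolding T_def by simp
  qed
  have nT: "\<forall>n\<in>supp f. nb n \<subseteq> T"
  proof (intro ballI subsetI)
    fix n m assume n: "n \<in> supp f" and m: "m \<in> nb n"
    then have "hh M (r n) \<noteq> 0" unfolding supp_def f_def by simp
    then have "r n < M" using hh_zero[OF _ M2] by (meson not_le)
    then show "m \<in> T" using rnb[OF m] unfolding T_def by simp
  qed
  have one: "\<forall>n. l1 (n - n0) \<le> 1 \<longrightarrow> f n = 1"
    unfolding f_def r_def using hh_one[OF M2] by (simp add: nat_le_iff)
  have edge: "(f n - f m)\<^sup>2 \<le> (tt M (r n))\<^sup>2" if "m \<in> nb n" for n m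
    unfolding f_def by (rule hh_edge[OF M2]) (use rnb[OF that] in simp)
  have inner: "(\<Sum>m\<in>nb n. (f n - f m)\<^sup>2) \<le> 4 * (tt M (r n))\<^sup>2" for n
  proof -
    have "(\<Sum>m\<in>nb n. (f n - f m)\<^sup>2) \<le> real (card (nb n)) * (tt M (r n))\<^sup>2"
      by (rule sum_bounded_above) (rule edge)
    also have "\<dots> \<le> 4 * (tt M (r n))\<^sup>2"
    proof -
      have "card (nb n) \<le> 4" using nb_card[of n] dim by auto
      then show ?thesis by (intro mult_right_mono) auto
    qed
    finally show ?thesis .
  qed
  have "(\<Sum>n\<in>T. \<Sum>m\<in>nb n. (f n - f m)\<^sup>2) \<le> (\<Sum>n\<in>T. 4 * (tt M (r n))\<^sup>2)"
    by (rule sum_mono) (rule inner)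
  also have "(\<Sum>n\<in>T. 4 * (tt M (r n))\<^sup>2) = (\<Sum>k\<in>{..Suc M}. \<Sum>n\<in>{n \<in> T. r n = k}. 4 * (tt M (r n))\<^sup>2)"
    by (rule sum.group[symmetric]) (use fT in \<open>auto simp: T_def\<close>)
  also have "\<dots> = (\<Sum>k\<in>{..Suc M}. 4 * (real (card {n. l1 (n - n0) = int k}) * (tt M k)\<^sup>2))"
  proof (rule sum.cong[OF refl])
    fix k assume "k \<in> {..Suc M}"
    then have "{n \<in> T. r n = k} = {n. l1 (n - n0) = int k}" using shell_eq by simp
    moreover have "(\<Sum>n\<in>{n \<in> T. r n = k}. 4 * (tt M (r n))\<^sup>2) = (\<Sum>n\<in>{n \<in> T. r n = k}. 4 * (tt M k)\<^sup>2)"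
      by (rule sum.cong) auto
    ultimately show "(\<Sum>n\<in>{n \<in> T. r n = k}. 4 * (tt M (r n))\<^sup>2) = 4 * (real (card {n. l1 (n - n0) = int k}) * (tt M k)\<^sup>2)"
      by simp
  qed
  also have "\<dots> \<le> (\<Sum>k\<in>{..Suc M}. 4 * ((4 * real k + 2) * (tt M k)\<^sup>2))"
  proof (rule sum_mono)
    fix k
    have "real (card {n. l1 (n - n0) = int k}) \<le> 4 * real k + 2"
      using shell[OF dim, of n0 k] by linarith
    then show "4 * (real (card {n. l1 (n - n0) = int k}) * (tt M k)\<^sup>2) \<le> 4 * ((4 * real k + 2) * (tt M k)\<^sup>2)"
      by (intro mult_left_mono mult_right_mono) auto
  qed
  also have "\<dots> = 4 * (\<Sum>k\<in>{..Suc M}. (4 * real k + 2) * (tt M k)\<^sup>2)"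
    by (simp add: sum_distrib_left)
  also have "\<dots> \<le> 4 * (6 * (1 + harm M) / (LL M)\<^sup>2)"
    by (rule mult_left_mono[OF tt_sum[OF M2]]) simp
  also have "\<dots> \<le> \<epsilon>" unfolding LL_def by (rule num_bound[OF e]) (use HM in auto)
  finally show ?thesis using fT sT nT one by blast
qed



theorem theorem1p4:
  fixes Q V \<psi> :: "int ^ 'd \<Rightarrow> real"
  assumes dim: "CARD('d) = 1 \<or> CARD('d) = 2"
    and bdd: "bounded_above_op Q"
    and psi_pos: "\<forall>n. \<psi> n > 0"
    and psi_bdd: "\<exists>B. \<forall>n. \<psi> n \<le> B"
    and ground: "\<forall>n. hop Q \<psi> n = ground_energy Q * \<psi> n"
    and plus: "op_le (\<lambda>n. Q n + V n) (ground_energy Q)"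
    and minus: "op_le (\<lambda>n. Q n - V n) (ground_energy Q)"
  shows "V = (\<lambda>n. 0)"
proof
  fix n0 :: "int ^ 'd"
  obtain B where B: "\<forall>n. \<psi> n \<le> B" using psi_bdd by blast
  define E where "E = ground_energy Q"
  have gr: "\<forall>n. (\<Sum>m\<in>nb n. \<psi> m) + Q n * \<psi> n = E * \<psi> n"
    using ground unfolding E_def hop_nb by simp
  have psi: "\<forall>n. 0 < \<psi> n \<and> \<psi> n \<le> B" using psi_pos B by simp
  have Bpos: "B > 0" using psi_pos B by (meson less_le_trans)
  define a where "a = V n0 * (\<psi> n0)\<^sup>2"
  define c where "c = \<psi> n0 * (\<Sum>m\<in>nb n0. \<psi> m)"
  have c0: "c \<ge> 0" unfolding c_def using psi_pos by (intro mult_nonneg_nonneg sum_nonneg) (auto intro: less_imp_le)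
  have key: "\<bar>a\<bar> \<le> t + t * c / 2" if t0: "0 < t" for t
  proof -
    have "2 * t\<^sup>2 / B\<^sup>2 > 0" using t0 Bpos by simp
    from cutoff[OF dim this, of n0] obtain f T where fT: "finite T" and sT: "supp f \<subseteq> T"
      and nT: "\<forall>n\<in>supp f. nb n \<subseteq> T" and one: "\<forall>n. l1 (n - n0) \<le> 1 \<longrightarrow> f n = 1"
      and en: "(\<Sum>n\<in>T. \<Sum>m\<in>nb n. (f n - f m)\<^sup>2) \<le> 2 * t\<^sup>2 / B\<^sup>2" by blast
    define \<phi> where "\<phi> = (\<lambda>n. \<psi> n * f n)"
    have "supp \<phi> \<subseteq> supp f" unfolding supp_def \<phi>_def by auto
    then have fs: "finsupp \<phi>" unfolding finsupp_def using fT sT by (meson finite_subset)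
    have Y: "E * sqnorm \<phi> - qform Q \<phi> \<le> t\<^sup>2"
    proof -
      have "E * sqnorm \<phi> - qform Q \<phi> \<le> B\<^sup>2 / 2 * (\<Sum>n\<in>T. \<Sum>m\<in>nb n. (f n - f m)\<^sup>2)"
        unfolding \<phi>_def by (rule gsr_bound[OF gr psi fT sT nT])
      also have "\<dots> \<le> B\<^sup>2 / 2 * (2 * t\<^sup>2 / B\<^sup>2)" using en Bpos by (intro mult_left_mono) auto
      also have "\<dots> = t\<^sup>2" using Bpos by (simp add: field_simps)
      finally show ?thesis .
    qed
    have l10: "l1 (n0 - n0) = 0" by (simp add: l1_def)
    have e0: "\<phi> n0 = \<psi> n0" unfolding \<phi>_def using one l10 by simp
    have enb: "\<forall>m\<in>nb n0. \<phi> m = \<psi> m"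
    proof
      fix m assume "m \<in> nb n0"
      then have "l1 (m - n0) = 1" unfolding nb_def nbr_def l1_def by simp
      then show "\<phi> m = \<psi> m" unfolding \<phi>_def using one by simp
    qed
    have grn0: "(\<Sum>m\<in>nb n0. \<psi> m) + Q n0 * \<psi> n0 = E * \<psi> n0" using gr by blast
    note P = perturb[where \<psi>=\<psi> and Q=Q and E=E and \<phi>=\<phi> and t=t, OF grn0 fs e0 enb]
    define \<phi>' where "\<phi>' = \<phi>(n0 := (1 + t) * \<psi> n0)"
    define X where "X = (\<Sum>n\<in>supp \<phi>. V n * (\<phi> n)\<^sup>2)"
    define Yv where "Yv = E * sqnorm \<phi> - qform Q \<phi>"
    have A1: "\<bar>X\<bar> \<le> Yv" unfolding X_def Yv_def
      by (rule pm_bound[OF plus[folded E_def] minus[folded E_def] fs])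
    have A2: "\<bar>X + (2 * t + t\<^sup>2) * a\<bar> \<le> Yv + t\<^sup>2 * c"
      using pm_bound[OF plus[folded E_def] minus[folded E_def] P(1)] P(2) P(3)[where V=V]
      unfolding X_def Yv_def a_def c_def by (simp add: mult.assoc)
    have "\<bar>(2 * t + t\<^sup>2) * a\<bar> \<le> 2 * Yv + t\<^sup>2 * c" using A1 A2 by linarith
    also have "\<dots> \<le> 2 * t\<^sup>2 + t\<^sup>2 * c" using Y unfolding Yv_def by (intro add_right_mono) simp
    finally have "(2 * t + t\<^sup>2) * \<bar>a\<bar> \<le> 2 * t\<^sup>2 + t\<^sup>2 * c"
      using t0 by (simp add: abs_mult)
    then have "t * ((2 + t) * \<bar>a\<bar>) \<le> t * (2 * t + t * c)" by (simp add: power2_eq_square algebra_simps)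
    then have "(2 + t) * \<bar>a\<bar> \<le> 2 * t + t * c" using t0 by simp
    moreover have "2 * \<bar>a\<bar> \<le> (2 + t) * \<bar>a\<bar>" using t0 by (intro mult_right_mono) auto
    ultimately show ?thesis by linarith
  qed
  have "a = 0"
  proof (rule ccontr)
    assume "a \<noteq> 0"
    then have ap: "\<bar>a\<bar> > 0" by simp
    define t where "t = \<bar>a\<bar> / (2 + c)"
    have t0: "t > 0" unfolding t_def using ap c0 by simp
    have "\<bar>a\<bar> \<le> t + t * c / 2" by (rule key[OF t0])
    also have "\<dots> = t * (2 + c) / 2" by (simp add: algebra_simps)
    also have "t * (2 + c) = \<bar>a\<bar>" unfolding t_def using c0 by simp
    finally show False using ap by simp
  qed
  then show "V n0 = 0" unfolding a_def using psi_pos[rule_format, of n0] by simp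
qed


end
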